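(* Let $\alpha\geq2$ be an ordinal and let $\mathbf V$ be $TA_\alpha$ or $SA_\alpha$. Let $\mathfrak A=\mathfrak{Fr}_X\mathbf V$ be the $\mathbf V$-free algebra on $X$, and let $X_1,X_2\subseteq X$ with $X_1\cup X_2=X$. If $a\in\mathfrak{Sg}^{\mathfrak A}X_1$, $c\in\mathfrak{Sg}^{\mathfrak A}X_2$ and $a\leq c$, then there is $b\in\mathfrak{Sg}^{\mathfrak A}(X_1\cap X_2)$ with $a\leq b\leq c$.
   Context: $TA_\alpha=\mathbf{Mod}(\Sigma_\alpha)$: Boolean algebras with operators $s_{ij}$ ($i\neq j<\alpha$) that are Boolean endomorphisms satisfying $t_1(x)=t_2(x)$ for all finite words $t_1,t_2$ in the $s_{ij}$ whose associated compositions of transpositions $[i,j]$ coincide. $SA_\alpha=\mathbf{Mod}(\Sigma'_\alpha)$: Boolean algebras with Boolean-endomorphism operators $s^i_j,s_{ij}$ ($i\neq j<\alpha$) satisfying $t_1(x)=t_2(x)$ whenever the associated maps $\alpha\to\alpha$ coincide, where $s_{ij}t\mapsto[i,j]\circ\hat t$, $s^i_jt\mapsto[i/j]\circ\hat t$, the empty word $\mapsto Id_\alpha$, and $[i/j]$ sends $i$ to $j$ and fixes the rest. $\mathfrak{Sg}^{\mathfrak A}Z$ is the subalgebra generated by $Z$. *)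

theory Defs
  imports Main
begin

text \<open>The ordinal alpha is represented by its set of elements, i.e. by a type 'i
  (only the index set matters; the hypothesis alpha >= 2 becomes: 'i has two
  distinct elements).  Sw i j is s_ij, Sb i j is s^i_j.\<close>

datatype 'i lab = Sw 'i 'i | Sb 'i 'i

definition transp_map :: "'i \<Rightarrow> 'i \<Rightarrow> 'i \<Rightarrow> 'i" where
  "transp_map i j = (\<lambda>k. if k = i then j else if k = j then i else k)"

definition repl_map :: "'i \<Rightarrow> 'i \<Rightarrow> 'i \<Rightarrow> 'i" where
  "repl_map i j = (\<lambda>k. if k = i then j else k)"

fun labmap :: "'i lab \<Rightarrow> 'i \<Rightarrow> 'i" where
  "labmap (Sw i j) = transp_map i j"
| "labmap (Sb i j) = repl_map i j"

definition wmap :: "'i lab list \<Rightarrow> 'i \<Rightarrow> 'i" where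
  "wmap w = foldr (\<lambda>l f. labmap l \<circ> f) w id"

definition TAops :: "'i lab set" where
  "TAops = {Sw i j | i j. i \<noteq> j}"

definition SAops :: "'i lab set" where
  "SAops = {Sw i j | i j. i \<noteq> j} \<union> {Sb i j | i j. i \<noteq> j}"

record ('a, 'o) balg =
  car :: "'a set"
  jn  :: "'a \<Rightarrow> 'a \<Rightarrow> 'a"
  mt  :: "'a \<Rightarrow> 'a \<Rightarrow> 'a"
  cp  :: "'a \<Rightarrow> 'a"
  zr  :: "'a"
  un  :: "'a"
  sop :: "'o \<Rightarrow> 'a \<Rightarrow> 'a"

definition is_BA :: "('a, 'o, 'm) balg_scheme \<Rightarrow> bool" where
  "is_BA A \<longleftrightarrow>
     zr A \<in> car A \<and> un A \<in> car A \<and>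
     (\<forall>x\<in>car A. cp A x \<in> car A) \<and>
     (\<forall>x\<in>car A. \<forall>y\<in>car A. jn A x y \<in> car A \<and> mt A x y \<in> car A) \<and>
     (\<forall>x\<in>car A. \<forall>y\<in>car A. jn A x y = jn A y x \<and> mt A x y = mt A y x) \<and>
     (\<forall>x\<in>car A. \<forall>y\<in>car A. \<forall>z\<in>car A.
        jn A x (jn A y z) = jn A (jn A x y) z \<and> mt A x (mt A y z) = mt A (mt A x y) z) \<and>
     (\<forall>x\<in>car A. \<forall>y\<in>car A. jn A x (mt A x y) = x \<and> mt A x (jn A x y) = x) \<and>
     (\<forall>x\<in>car A. \<forall>y\<in>car A. \<forall>z\<in>car A.
        mt A x (jn A y z) = jn A (mt A x y) (mt A x z)) \<and>
     (\<forall>x\<in>car A. jn A x (zr A) = x \<and> mt A x (un A) = x) \<and>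
     (\<forall>x\<in>car A. jn A x (cp A x) = un A \<and> mt A x (cp A x) = zr A)"

definition bool_endo :: "('a, 'o, 'm) balg_scheme \<Rightarrow> ('a \<Rightarrow> 'a) \<Rightarrow> bool" where
  "bool_endo A f \<longleftrightarrow>
     (\<forall>x\<in>car A. f x \<in> car A) \<and>
     (\<forall>x\<in>car A. \<forall>y\<in>car A. f (jn A x y) = jn A (f x) (f y) \<and> f (mt A x y) = mt A (f x) (f y)) \<and>
     (\<forall>x\<in>car A. f (cp A x) = cp A (f x)) \<and>
     f (zr A) = zr A \<and> f (un A) = un A"

definition wapp :: "('a, 'i lab, 'm) balg_scheme \<Rightarrow> 'i lab list \<Rightarrow> 'a \<Rightarrow> 'a" where
  "wapp A w = foldr (\<lambda>l f. sop A l \<circ> f) w id"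

text \<open>Only the operators
  with labels in Ops belong to the signature.\<close>
definition in_var :: "'i lab set \<Rightarrow> ('a, 'i lab, 'm) balg_scheme \<Rightarrow> bool" where
  "in_var Ops A \<longleftrightarrow> is_BA A \<and> (\<forall>l\<in>Ops. bool_endo A (sop A l)) \<and>
     (\<forall>w1 w2. set w1 \<subseteq> Ops \<longrightarrow> set w2 \<subseteq> Ops \<longrightarrow> wmap w1 = wmap w2 \<longrightarrow>
        (\<forall>x\<in>car A. wapp A w1 x = wapp A w2 x))"

abbreviation TA :: "('a, 'i lab, 'm) balg_scheme \<Rightarrow> bool" where
  "TA A \<equiv> in_var TAops A"

abbreviation SA :: "('a, 'i lab, 'm) balg_scheme \<Rightarrow> bool" where
  "SA A \<equiv> in_var SAops A"

definition leq :: "('a, 'o, 'm) balg_scheme \<Rightarrow> 'a \<Rightarrow> 'a \<Rightarrow> bool" where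
  "leq A x y \<longleftrightarrow> jn A x y = y"

inductive_set Sg :: "('a, 'o, 'm) balg_scheme \<Rightarrow> 'o set \<Rightarrow> 'a set \<Rightarrow> 'a set"
  for A :: "('a, 'o, 'm) balg_scheme" and Ops :: "'o set" and Z :: "'a set" where
  gen: "z \<in> Z \<Longrightarrow> z \<in> Sg A Ops Z"
| zr: "zr A \<in> Sg A Ops Z"
| un: "un A \<in> Sg A Ops Z"
| cp: "x \<in> Sg A Ops Z \<Longrightarrow> cp A x \<in> Sg A Ops Z"
| jn: "x \<in> Sg A Ops Z \<Longrightarrow> y \<in> Sg A Ops Z \<Longrightarrow> jn A x y \<in> Sg A Ops Z"
| mt: "x \<in> Sg A Ops Z \<Longrightarrow> y \<in> Sg A Ops Z \<Longrightarrow> mt A x y \<in> Sg A Ops Z"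
| op: "l \<in> Ops \<Longrightarrow> x \<in> Sg A Ops Z \<Longrightarrow> sop A l x \<in> Sg A Ops Z"

datatype ('x, 'o) trm = Var 'x | Jn "('x, 'o) trm" "('x, 'o) trm"
  | Mt "('x, 'o) trm" "('x, 'o) trm" | Cp "('x, 'o) trm" | Zr | Tp | Op 'o "('x, 'o) trm"

fun vars :: "('x, 'o) trm \<Rightarrow> 'x set" and opsof :: "('x, 'o) trm \<Rightarrow> 'o set" where
  "vars (Var x) = {x}"
| "vars (Jn s t) = vars s \<union> vars t"
| "vars (Mt s t) = vars s \<union> vars t"
| "vars (Cp t) = vars t"
| "vars Zr = {}"
| "vars Tp = {}"
| "vars (Op l t) = vars t"
| "opsof (Var x) = {}"
| "opsof (Jn s t) = opsof s \<union> opsof t"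
| "opsof (Mt s t) = opsof s \<union> opsof t"
| "opsof (Cp t) = opsof t"
| "opsof Zr = {}"
| "opsof Tp = {}"
| "opsof (Op l t) = insert l (opsof t)"

definition Terms :: "'o set \<Rightarrow> 'x set \<Rightarrow> ('x, 'o) trm set" where
  "Terms Ops X = {t. vars t \<subseteq> X \<and> opsof t \<subseteq> Ops}"

definition is_cong :: "'o set \<Rightarrow> 'x set \<Rightarrow> (('x, 'o) trm \<times> ('x, 'o) trm) set \<Rightarrow> bool" where
  "is_cong Ops X \<psi> \<longleftrightarrow> equiv (Terms Ops X) \<psi> \<and>
     (\<forall>a b c d. (a, b) \<in> \<psi> \<longrightarrow> (c, d) \<in> \<psi> \<longrightarrow>
        (Jn a c, Jn b d) \<in> \<psi> \<and> (Mt a c, Mt b d) \<in> \<psi>) \<and>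
     (\<forall>a b. (a, b) \<in> \<psi> \<longrightarrow> (Cp a, Cp b) \<in> \<psi>) \<and>
     (\<forall>l\<in>Ops. \<forall>a b. (a, b) \<in> \<psi> \<longrightarrow> (Op l a, Op l b) \<in> \<psi>)"

definition quot :: "'o set \<Rightarrow> 'x set \<Rightarrow> (('x, 'o) trm \<times> ('x, 'o) trm) set
                    \<Rightarrow> (('x, 'o) trm set, 'o) balg" where
  "quot Ops X \<psi> =
     \<lparr> car = Terms Ops X // \<psi>,
       jn = (\<lambda>C D. \<Union>c\<in>C. \<Union>d\<in>D. \<psi> `` {Jn c d}),
       mt = (\<lambda>C D. \<Union>c\<in>C. \<Union>d\<in>D. \<psi> `` {Mt c d}),
       cp = (\<lambda>C. \<Union>c\<in>C. \<psi> `` {Cp c}),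
       zr = \<psi> `` {Zr},
       un = \<psi> `` {Tp},
       sop = (\<lambda>l C. \<Union>c\<in>C. \<psi> `` {Op l c}) \<rparr>"

definition theta :: "'i lab set \<Rightarrow> 'x set \<Rightarrow> (('x, 'i lab) trm \<times> ('x, 'i lab) trm) set" where
  "theta Ops X = (Terms Ops X \<times> Terms Ops X) \<inter>
     \<Inter>{\<psi>. is_cong Ops X \<psi> \<and> in_var Ops (quot Ops X \<psi>)}"

definition Fr :: "'i lab set \<Rightarrow> 'x set \<Rightarrow> (('x, 'i lab) trm set, 'i lab) balg" where
  "Fr Ops X = quot Ops X (theta Ops X)"

definition frgen :: "'i lab set \<Rightarrow> 'x set \<Rightarrow> 'x \<Rightarrow> ('x, 'i lab) trm set" where
  "frgen Ops X x = theta Ops X `` {Var x}"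

end

theory Submission
  imports Defs
begin


locale BA = fixes A :: "('a,'o,'m) balg_scheme" assumes BA: "is_BA A"
begin
lemma cl: "zr A \<in> car A" "un A \<in> car A" "x \<in> car A \<Longrightarrow> cp A x \<in> car A"
  "x \<in> car A \<Longrightarrow> y \<in> car A \<Longrightarrow> jn A x y \<in> car A"
  "x \<in> car A \<Longrightarrow> y \<in> car A \<Longrightarrow> mt A x y \<in> car A"
  using BA unfolding is_BA_def by blast+
lemma comm: "x \<in> car A \<Longrightarrow> y \<in> car A \<Longrightarrow> jn A x y = jn A y x"
  "x \<in> car A \<Longrightarrow> y \<in> car A \<Longrightarrow> mt A x y = mt A y x"
  using BA unfolding is_BA_def by blast+
lemma assoc: "x \<in> car A \<Longrightarrow> y \<in> car A \<Longrightarrow> z \<in> car A \<Longrightarrow> jn A (jn A x y) z = jn A x (jn A y z)"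
  "x \<in> car A \<Longrightarrow> y \<in> car A \<Longrightarrow> z \<in> car A \<Longrightarrow> mt A (mt A x y) z = mt A x (mt A y z)"
proof -
  have H: "\<forall>x\<in>car A. \<forall>y\<in>car A. \<forall>z\<in>car A.
             jn A x (jn A y z) = jn A (jn A x y) z \<and> mt A x (mt A y z) = mt A (mt A x y) z"
    using BA unfolding is_BA_def by blast
  show "x \<in> car A \<Longrightarrow> y \<in> car A \<Longrightarrow> z \<in> car A \<Longrightarrow> jn A (jn A x y) z = jn A x (jn A y z)"
    "x \<in> car A \<Longrightarrow> y \<in> car A \<Longrightarrow> z \<in> car A \<Longrightarrow> mt A (mt A x y) z = mt A x (mt A y z)"
    using H by simp_all
qed
lemma lcomm: "x \<in> car A \<Longrightarrow> y \<in> car A \<Longrightarrow> z \<in> car A \<Longrightarrow> jn A x (jn A y z) = jn A y (jn A x z)"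
  "x \<in> car A \<Longrightarrow> y \<in> car A \<Longrightarrow> z \<in> car A \<Longrightarrow> mt A x (mt A y z) = mt A y (mt A x z)"
  by (metis assoc(1) comm(1) cl(4), metis assoc(2) comm(2) cl(5))
lemma absorb: "x \<in> car A \<Longrightarrow> y \<in> car A \<Longrightarrow> jn A x (mt A x y) = x"
  "x \<in> car A \<Longrightarrow> y \<in> car A \<Longrightarrow> mt A x (jn A x y) = x"
  using BA unfolding is_BA_def by blast+
lemma distr: "x \<in> car A \<Longrightarrow> y \<in> car A \<Longrightarrow> z \<in> car A \<Longrightarrow> mt A x (jn A y z) = jn A (mt A x y) (mt A x z)"
  using BA unfolding is_BA_def by blast+
lemma idt: "x \<in> car A \<Longrightarrow> jn A x (zr A) = x" "x \<in> car A \<Longrightarrow> mt A x (un A) = x"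
  using BA unfolding is_BA_def by blast+
lemma compl: "x \<in> car A \<Longrightarrow> jn A x (cp A x) = un A" "x \<in> car A \<Longrightarrow> mt A x (cp A x) = zr A"
  using BA unfolding is_BA_def by blast+

lemmas ac = comm assoc lcomm

lemma idem: "x \<in> car A \<Longrightarrow> mt A x x = x" "x \<in> car A \<Longrightarrow> jn A x x = x"
proof -
  assume x: "x \<in> car A"
  show "mt A x x = x" using absorb(2)[OF x, of "zr A"] idt(1)[OF x] by (simp add: cl)
  show "jn A x x = x" using absorb(1)[OF x, of "un A"] idt(2)[OF x] by (simp add: cl)
qed

lemma distr2: "x \<in> car A \<Longrightarrow> y \<in> car A \<Longrightarrow> z \<in> car A \<Longrightarrow> mt A (jn A y z) x = jn A (mt A y x) (mt A z x)"
  using distr[of x y z] comm(2)[of x] by (simp add: cl)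

lemma zero_mt: "x \<in> car A \<Longrightarrow> mt A x (zr A) = zr A"
proof -
  assume x: "x \<in> car A"
  have "mt A x (zr A) = mt A x (mt A x (cp A x))" using compl x by simp
  also have "\<dots> = mt A x (cp A x)" using assoc(2)[of x x "cp A x"] idem x by (simp add: cl)
  finally show ?thesis using compl x by simp
qed

lemma one_jn: "x \<in> car A \<Longrightarrow> jn A x (un A) = un A"
proof -
  assume x: "x \<in> car A"
  have "jn A x (un A) = jn A x (jn A x (cp A x))" using compl x by simp
  also have "\<dots> = jn A x (cp A x)" using assoc(1)[of x x "cp A x"] idem x by (simp add: cl)
  finally show ?thesis using compl x by simp
qed

lemma cp_unique: assumes x: "x \<in> car A" and y: "y \<in> car A"
  and j: "jn A x y = un A" and m: "mt A x y = zr A" shows "y = cp A x"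
proof -
  have "y = mt A y (jn A x (cp A x))" using compl idt x y by simp
  also have "\<dots> = jn A (mt A y x) (mt A y (cp A x))" using distr x y cl by simp
  also have "\<dots> = mt A y (cp A x)" using m comm(2)[of x y] comm(1)[of "zr A"] idt x y by (simp add: cl)
  finally have 1: "y = mt A y (cp A x)" .
  have "cp A x = mt A (cp A x) (jn A x y)" using j idt x cl by simp
  also have "\<dots> = jn A (mt A (cp A x) x) (mt A (cp A x) y)" using distr x y cl by simp
  also have "\<dots> = mt A (cp A x) y" using compl comm(2)[of x "cp A x"] comm(1)[of "zr A"] idt x y by (simp add: cl)
  finally show ?thesis using 1 comm(2)[of y "cp A x"] x y by (simp add: cl)
qed

lemma zero_mt': "x \<in> car A \<Longrightarrow> mt A (zr A) x = zr A"
  using zero_mt[of x] comm(2)[of x "zr A"] by (simp add: cl)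
lemma one_jn': "x \<in> car A \<Longrightarrow> jn A (un A) x = un A"
  using one_jn[of x] comm(1)[of x "un A"] by (simp add: cl)
lemma idt': "x \<in> car A \<Longrightarrow> jn A (zr A) x = x" "x \<in> car A \<Longrightarrow> mt A (un A) x = x"
  using idt[of x] comm[of x] by (simp_all add: cl)

lemma cp0: "cp A (zr A) = un A"
  by (rule cp_unique[symmetric]) (simp_all add: cl idt' zero_mt')
lemma cp1: "cp A (un A) = zr A"
  by (rule cp_unique[symmetric]) (simp_all add: cl idt one_jn zero_mt)

lemma swap4: "x \<in> car A \<Longrightarrow> y \<in> car A \<Longrightarrow> z \<in> car A \<Longrightarrow> w \<in> car A \<Longrightarrow>
   jn A (jn A x y) (jn A z w) = jn A (jn A x z) (jn A y w)"
   "x \<in> car A \<Longrightarrow> y \<in> car A \<Longrightarrow> z \<in> car A \<Longrightarrow> w \<in> car A \<Longrightarrow>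
   mt A (mt A x y) (mt A z w) = mt A (mt A x z) (mt A y w)"
  by (simp_all add: assoc cl lcomm[of y z])

definition sh where "sh P a b = jn A (mt A P a) (mt A (cp A P) b)"

lemma sh_cl: "P \<in> car A \<Longrightarrow> a \<in> car A \<Longrightarrow> b \<in> car A \<Longrightarrow> sh P a b \<in> car A"
  unfolding sh_def by (simp add: cl)

lemma sh_same: assumes "P \<in> car A" "a \<in> car A" shows "sh P a a = a"
proof -
  have "sh P a a = mt A (jn A P (cp A P)) a" unfolding sh_def using assms by (simp add: distr2 cl)
  then show ?thesis using assms by (simp add: compl idt')
qed

lemma sh_self: "P \<in> car A \<Longrightarrow> sh P (un A) (zr A) = P"
  unfolding sh_def by (simp add: zero_mt idt idt' cl)

lemma sh_jn: assumes "P \<in> car A" "a \<in> car A" "b \<in> car A" "c \<in> car A" "d \<in> car A"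
  shows "jn A (sh P a b) (sh P c d) = sh P (jn A a c) (jn A b d)"
  unfolding sh_def using assms by (simp add: distr swap4 cl)

lemma sh_mt: assumes P: "P \<in> car A" and ab: "a \<in> car A" "b \<in> car A" and cd: "c \<in> car A" "d \<in> car A"
  shows "mt A (sh P a b) (sh P c d) = sh P (mt A a c) (mt A b d)"
proof -
  note C = cl P ab cd
  have 1: "mt A (sh P a b) (sh P c d) = jn A (jn A (mt A (mt A P a) (mt A P c)) (mt A (mt A P a) (mt A (cp A P) d)))
     (jn A (mt A (mt A (cp A P) b) (mt A P c)) (mt A (mt A (cp A P) b) (mt A (cp A P) d)))"
    unfolding sh_def by (simp add: C distr distr2, rule swap4(1), simp_all add: C)
  have 2: "mt A (mt A P a) (mt A P c) = mt A P (mt A a c)" by (simp add: C swap4 idem)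
  have 3: "mt A (mt A (cp A P) b) (mt A (cp A P) d) = mt A (cp A P) (mt A b d)"
    using swap4(2)[of "cp A P" b "cp A P" d] idem(1)[of "cp A P"] by (simp add: C)
  have 4: "mt A (mt A P a) (mt A (cp A P) d) = zr A"
    using swap4(2)[of P a "cp A P" d] compl(2)[OF P] zero_mt'[of "mt A a d"] by (simp add: C)
  have 5: "mt A (mt A (cp A P) b) (mt A P c) = zr A"
    using swap4(2)[of "cp A P" b P c] compl(2)[OF P] comm(2)[of P "cp A P"] zero_mt'[of "mt A b c"] by (simp add: C)
  show ?thesis using 1 unfolding 2 3 4 5 by (simp add: C idt idt' sh_def)
qed

lemma sh_cp: assumes P: "P \<in> car A" and ab: "a \<in> car A" "b \<in> car A"
  shows "cp A (sh P a b) = sh P (cp A a) (cp A b)"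
proof (rule cp_unique[symmetric])
  note C = cl P ab
  show "jn A (sh P a b) (sh P (cp A a) (cp A b)) = un A"
    by (simp add: C sh_jn compl sh_same)
  show "mt A (sh P a b) (sh P (cp A a) (cp A b)) = zr A"
    by (simp add: C sh_mt compl sh_same)
qed (simp_all add: sh_cl cl assms)

end

datatype 'p bf = BV 'p | BJ "'p bf" "'p bf" | BM "'p bf" "'p bf" | BC "'p bf" | B0 | B1

fun beval :: "('p \<Rightarrow> bool) \<Rightarrow> 'p bf \<Rightarrow> bool" where
  "beval v (BV p) = v p"
| "beval v (BJ f g) = (beval v f \<or> beval v g)"
| "beval v (BM f g) = (beval v f \<and> beval v g)"
| "beval v (BC f) = (\<not> beval v f)"
| "beval v B0 = False"
| "beval v B1 = True"

fun bI :: "('a,'o,'m) balg_scheme \<Rightarrow> ('p \<Rightarrow> 'a) \<Rightarrow> 'p bf \<Rightarrow> 'a" where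
  "bI A r (BV p) = r p"
| "bI A r (BJ f g) = jn A (bI A r f) (bI A r g)"
| "bI A r (BM f g) = mt A (bI A r f) (bI A r g)"
| "bI A r (BC f) = cp A (bI A r f)"
| "bI A r B0 = zr A"
| "bI A r B1 = un A"

fun bsub :: "'p \<Rightarrow> 'p bf \<Rightarrow> 'p bf \<Rightarrow> 'p bf" where
  "bsub p c (BV q) = (if q = p then c else BV q)"
| "bsub p c (BJ f g) = BJ (bsub p c f) (bsub p c g)"
| "bsub p c (BM f g) = BM (bsub p c f) (bsub p c g)"
| "bsub p c (BC f) = BC (bsub p c f)"
| "bsub p c B0 = B0"
| "bsub p c B1 = B1"

lemma beval_bsub: "beval v (bsub p B1 f) = beval (v(p:=True)) f"
  "beval v (bsub p B0 f) = beval (v(p:=False)) f"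
  by (induct f) auto

lemma set_bsub: "set_bf c = {} \<Longrightarrow> set_bf (bsub p c f) \<subseteq> set_bf f - {p}"
  by (induct f) auto

lemma beval_cong: "\<forall>q\<in>set_bf f. v q = w q \<Longrightarrow> beval v f = beval w f"
  by (induct f) auto

lemma bI_cong: "\<forall>q\<in>set_bf f. v q = w q \<Longrightarrow> bI A v f = bI A w f"
  by (induct f) auto

lemma beval_map: "beval v (map_bf g f) = beval (v \<circ> g) f"
  by (induct f) auto

lemma bI_map: "bI A r (map_bf g f) = bI A (r \<circ> g) f"
  by (induct f) auto

context BA begin

lemma bI_cl: "\<forall>q\<in>set_bf f. r q \<in> car A \<Longrightarrow> bI A r f \<in> car A"
  by (induct f) (auto simp: cl)

lemma shannon: "r p \<in> car A \<Longrightarrow> \<forall>q\<in>set_bf f. r q \<in> car A \<Longrightarrow>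
  bI A r f = sh (r p) (bI A r (bsub p B1 f)) (bI A r (bsub p B0 f))"
proof (induct f)
  case (BV q) then show ?case by (auto simp: sh_self sh_same cl)
next
  case (BJ f g)
  have "\<forall>q\<in>set_bf (bsub p B1 f). r q \<in> car A" "\<forall>q\<in>set_bf (bsub p B0 f). r q \<in> car A"
    "\<forall>q\<in>set_bf (bsub p B1 g). r q \<in> car A" "\<forall>q\<in>set_bf (bsub p B0 g). r q \<in> car A"
    using BJ.prems set_bsub[of B1 p] set_bsub[of B0 p] by fastforce+
  then show ?case using BJ by (simp add: bI_cl sh_jn)
next
  case (BM f g)
  have "\<forall>q\<in>set_bf (bsub p B1 f). r q \<in> car A" "\<forall>q\<in>set_bf (bsub p B0 f). r q \<in> car A"
    "\<forall>q\<in>set_bf (bsub p B1 g). r q \<in> car A" "\<forall>q\<in>set_bf (bsub p B0 g). r q \<in> car A"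
    using BM.prems set_bsub[of B1 p] set_bsub[of B0 p] by fastforce+
  then show ?case using BM by (simp add: bI_cl sh_mt)
next
  case (BC f)
  have "\<forall>q\<in>set_bf (bsub p B1 f). r q \<in> car A" "\<forall>q\<in>set_bf (bsub p B0 f). r q \<in> car A"
    using BC.prems set_bsub[of B1 p] set_bsub[of B0 p] by fastforce+
  then show ?case using BC by (simp add: bI_cl sh_cp)
qed (simp_all add: sh_same cl)

lemma ground: "set_bf f = {} \<Longrightarrow> bI A r f = (if beval v f then un A else zr A)"
  by (induct f) (auto simp: cl idt idt' one_jn one_jn' zero_mt zero_mt' cp0 cp1)

lemma complete: "set_bf f \<union> set_bf g \<subseteq> set ps \<Longrightarrow> \<forall>q\<in>set ps. r q \<in> car A \<Longrightarrow>
   (\<forall>v. beval v f = beval v g) \<Longrightarrow> bI A r f = bI A r g"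
proof (induct ps arbitrary: f g)
  case Nil
  then show ?case using ground[of f r "\<lambda>_. False"] ground[of g r "\<lambda>_. False"] by simp
next
  case (Cons p ps)
  have rp: "r p \<in> car A" using Cons by simp
  have af: "\<forall>q\<in>set_bf f. r q \<in> car A" "\<forall>q\<in>set_bf g. r q \<in> car A" using Cons.prems by auto
  have 1: "bI A r (bsub p B1 f) = bI A r (bsub p B1 g)"
    apply (rule Cons.hyps)
    using Cons.prems set_bsub[of B1 p f] set_bsub[of B1 p g] apply auto[2]
    unfolding beval_bsub using Cons.prems(3) by blast
  have 0: "bI A r (bsub p B0 f) = bI A r (bsub p B0 g)"
    apply (rule Cons.hyps)
    using Cons.prems set_bsub[of B0 p f] set_bsub[of B0 p g] apply auto[2]
    unfolding beval_bsub using Cons.prems(3) by blast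
  show ?case using shannon[OF rp af(1)] shannon[OF rp af(2)] 1 0 by simp
qed

end


fun eval :: "(('i \<Rightarrow> 'i) \<times> 'x \<Rightarrow> bool) \<Rightarrow> ('x, 'i lab) trm \<Rightarrow> bool" where
  "eval v (Var x) = v (id, x)"
| "eval v (Jn s t) = (eval v s \<or> eval v t)"
| "eval v (Mt s t) = (eval v s \<and> eval v t)"
| "eval v (Cp t) = (\<not> eval v t)"
| "eval v Zr = False"
| "eval v Tp = True"
| "eval v (Op l t) = eval (\<lambda>(m, x). v (labmap l \<circ> m, x)) t"

definition opw :: "'o list \<Rightarrow> ('x, 'o) trm \<Rightarrow> ('x, 'o) trm" where
  "opw w t = foldr Op w t"

lemma opw_simps[simp]: "opw [] t = t" "opw (l # w) t = Op l (opw w t)" "opw (w @ [l]) t = opw w (Op l t)"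
  by (simp_all add: opw_def)

lemma wmap_simps[simp]: "wmap [] = id" "wmap (l # w) = labmap l \<circ> wmap w"
  by (simp_all add: wmap_def)

lemma wmap_snoc: "wmap (w @ [l]) = wmap w \<circ> labmap l"
  by (induct w) (auto simp: comp_assoc)

lemma eval_opw: "eval v (opw w t) = eval (\<lambda>(m, x). v (wmap w \<circ> m, x)) t"
proof (induct w arbitrary: v)
  case Nil then show ?case by (simp add: case_prod_unfold)
next
  case (Cons l w) then show ?case by (simp add: case_prod_unfold comp_def)
qed

fun push :: "'o list \<Rightarrow> ('x, 'o) trm \<Rightarrow> ('o list \<times> 'x) bf" where
  "push w (Var x) = BV (w, x)"
| "push w (Jn s t) = BJ (push w s) (push w t)"
| "push w (Mt s t) = BM (push w s) (push w t)"
| "push w (Cp t) = BC (push w t)"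
| "push w Zr = B0"
| "push w Tp = B1"
| "push w (Op l t) = push (w @ [l]) t"

lemma eval_push: "eval (\<lambda>(m, x). v (wmap w \<circ> m, x)) t = beval (\<lambda>(w', x). v (wmap w', x)) (push w t)"
proof (induct t arbitrary: w)
  case (Op l t)
  then show ?case using Op[of "w @ [l]"] by (simp add: case_prod_unfold wmap_snoc comp_def)
qed (auto simp: case_prod_unfold)

definition kap :: "'i lab list \<times> 'x \<Rightarrow> ('i \<Rightarrow> 'i) \<times> 'x" where
  "kap q = (wmap (fst q), snd q)"

definition nf :: "('x, 'i lab) trm \<Rightarrow> (('i \<Rightarrow> 'i) \<times> 'x) bf" where
  "nf t = map_bf kap (push [] t)"

lemma eval_nf: "eval v t = beval v (nf t)"
  using eval_push[of v "[]" t] by (simp add: nf_def beval_map kap_def comp_def case_prod_unfold)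

lemma set_push: "q \<in> set_bf (push w t) \<Longrightarrow> set (fst q) \<subseteq> set w \<union> opsof t \<and> snd q \<in> vars t"
  by (induct t arbitrary: w) fastforce+

definition realz :: "'i lab set \<Rightarrow> ('i \<Rightarrow> 'i) \<Rightarrow> bool" where
  "realz Ops m \<longleftrightarrow> (\<exists>w. set w \<subseteq> Ops \<and> wmap w = m)"

definition wof :: "'i lab set \<Rightarrow> ('i \<Rightarrow> 'i) \<Rightarrow> 'i lab list" where
  "wof Ops m = (SOME w. set w \<subseteq> Ops \<and> wmap w = m)"

lemma wof: "realz Ops m \<Longrightarrow> set (wof Ops m) \<subseteq> Ops \<and> wmap (wof Ops m) = m"
  unfolding realz_def wof_def by (rule someI_ex)

lemma set_nf: "t \<in> Terms Ops X \<Longrightarrow> q \<in> set_bf (nf t) \<Longrightarrow> realz Ops (fst q) \<and> snd q \<in> vars t"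
proof -
  assume t: "t \<in> Terms Ops X" and q: "q \<in> set_bf (nf t)"
  then obtain q' where q': "q' \<in> set_bf (push [] t)" "q = kap q'" unfolding nf_def by (auto simp: bf.set_map)
  then have "set (fst q') \<subseteq> Ops" "snd q \<in> vars t" using set_push[OF q'(1)] t by (auto simp: Terms_def kap_def)
  then show ?thesis using q' unfolding realz_def kap_def by auto
qed

fun toT :: "'i lab set \<Rightarrow> (('i \<Rightarrow> 'i) \<times> 'x) bf \<Rightarrow> ('x, 'i lab) trm" where
  "toT Ops (BV q) = opw (wof Ops (fst q)) (Var (snd q))"
| "toT Ops (BJ f g) = Jn (toT Ops f) (toT Ops g)"
| "toT Ops (BM f g) = Mt (toT Ops f) (toT Ops g)"
| "toT Ops (BC f) = Cp (toT Ops f)"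
| "toT Ops B0 = Zr"
| "toT Ops B1 = Tp"

lemma opsof_opw: "opsof (opw w t) = set w \<union> opsof t" and vars_opw: "vars (opw w t) = vars t"
  by (induct w) auto

lemma eval_toT: "\<forall>q\<in>set_bf f. realz Ops (fst q) \<Longrightarrow> eval v (toT Ops f) = beval v f"
proof (induct f)
  case (BV q) then show ?case using wof[of Ops "fst q"] by (simp add: eval_opw)
qed auto

lemma vars_toT: "vars (toT Ops f) = snd ` set_bf f"
  by (induct f) (auto simp: vars_opw)

lemma opsof_toT: "\<forall>q\<in>set_bf f. realz Ops (fst q) \<Longrightarrow> opsof (toT Ops f) \<subseteq> Ops"
proof (induct f)
  case (BV q) then show ?case using wof[of Ops "fst q"] by (simp add: opsof_opw)
qed auto

fun elimL :: "'p list \<Rightarrow> 'p bf \<Rightarrow> 'p bf" where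
  "elimL [] f = f"
| "elimL (p # ps) f = BJ (bsub p B1 (elimL ps f)) (bsub p B0 (elimL ps f))"

lemma set_elimL: "set_bf (elimL ps f) \<subseteq> set_bf f - set ps"
proof (induct ps)
  case (Cons p ps)
  then show ?case using set_bsub[of B1 p "elimL ps f"] set_bsub[of B0 p "elimL ps f"] by auto
qed simp

lemma beval_elimL: "beval v (elimL ps f) \<longleftrightarrow> (\<exists>w. (\<forall>q. q \<notin> set ps \<longrightarrow> w q = v q) \<and> beval w f)"
proof (induct ps arbitrary: v)
  case Nil
  show ?case by (simp add: fun_eq_iff[symmetric])
next
  case (Cons p ps)
  have "beval v (elimL (p # ps) f) \<longleftrightarrow> beval (v(p:=True)) (elimL ps f) \<or> beval (v(p:=False)) (elimL ps f)"
    by (simp add: beval_bsub)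
  also have "\<dots> \<longleftrightarrow> (\<exists>w. (\<forall>q. q \<notin> set (p # ps) \<longrightarrow> w q = v q) \<and> beval w f)"
    unfolding Cons
  proof safe
    fix w assume "\<forall>q. q \<notin> set ps \<longrightarrow> w q = (v(p := True)) q" "beval w f"
    then show "\<exists>w. (\<forall>q. q \<notin> set (p # ps) \<longrightarrow> w q = v q) \<and> beval w f" by (intro exI[of _ w]) auto
  next
    fix w assume "\<forall>q. q \<notin> set ps \<longrightarrow> w q = (v(p := False)) q" "beval w f"
    then show "\<exists>w. (\<forall>q. q \<notin> set (p # ps) \<longrightarrow> w q = v q) \<and> beval w f" by (intro exI[of _ w]) auto
  next
    fix w assume a: "\<forall>q. q \<notin> set (p # ps) \<longrightarrow> w q = v q" "beval w f"
      and n: "\<nexists>w. (\<forall>q. q \<notin> set ps \<longrightarrow> w q = (v(p := False)) q) \<and> beval w f"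
    show "\<exists>w. (\<forall>q. q \<notin> set ps \<longrightarrow> w q = (v(p := True)) q) \<and> beval w f"
    proof (cases "w p")
      case True then show ?thesis using a by (intro exI[of _ w]) auto
    next
      case False
      then have "\<forall>q. q \<notin> set ps \<longrightarrow> w q = (v(p := False)) q" using a by auto
      then show ?thesis using a(2) n by blast
    qed
  qed
  finally show ?case .
qed


lemma Terms_simps[simp]:
  "Var x \<in> Terms Ops X \<longleftrightarrow> x \<in> X"
  "Jn a b \<in> Terms Ops X \<longleftrightarrow> a \<in> Terms Ops X \<and> b \<in> Terms Ops X"
  "Mt a b \<in> Terms Ops X \<longleftrightarrow> a \<in> Terms Ops X \<and> b \<in> Terms Ops X"
  "Cp a \<in> Terms Ops X \<longleftrightarrow> a \<in> Terms Ops X"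
  "Zr \<in> Terms Ops X" "Tp \<in> Terms Ops X"
  "Op l a \<in> Terms Ops X \<longleftrightarrow> l \<in> Ops \<and> a \<in> Terms Ops X"
  by (auto simp: Terms_def)

lemma opw_Terms: "set w \<subseteq> Ops \<Longrightarrow> t \<in> Terms Ops X \<Longrightarrow> opw w t \<in> Terms Ops X"
  by (induct w) auto

lemma cong_equiv: "is_cong Ops X \<psi> \<Longrightarrow> equiv (Terms Ops X) \<psi>"
  by (simp add: is_cong_def)

lemma UN_const: "(\<And>c. c \<in> C \<Longrightarrow> F c = K) \<Longrightarrow> C \<noteq> {} \<Longrightarrow> (\<Union>c\<in>C. F c) = K"
  by auto

lemma quot_simps[simp]: "car (quot Ops X \<psi>) = Terms Ops X // \<psi>" "zr (quot Ops X \<psi>) = \<psi>``{Zr}"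
  "un (quot Ops X \<psi>) = \<psi>``{Tp}"
  by (simp_all add: quot_def)

lemma cls_ops: assumes C: "is_cong Ops X \<psi>" and a: "a \<in> Terms Ops X" and b: "b \<in> Terms Ops X"
  shows "jn (quot Ops X \<psi>) (\<psi>``{a}) (\<psi>``{b}) = \<psi>``{Jn a b}"
   "mt (quot Ops X \<psi>) (\<psi>``{a}) (\<psi>``{b}) = \<psi>``{Mt a b}"
   "cp (quot Ops X \<psi>) (\<psi>``{a}) = \<psi>``{Cp a}"
   "l \<in> Ops \<Longrightarrow> sop (quot Ops X \<psi>) l (\<psi>``{a}) = \<psi>``{Op l a}"
proof -
  have E: "equiv (Terms Ops X) \<psi>" using C by (rule cong_equiv)
  have na: "\<psi>``{a} \<noteq> {}" and nb: "\<psi>``{b} \<noteq> {}" using equiv_class_self[OF E a] equiv_class_self[OF E b] by auto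
  have ra: "(a, c) \<in> \<psi>" if "c \<in> \<psi>``{a}" for c using that by simp
  have rb: "(b, c) \<in> \<psi>" if "c \<in> \<psi>``{b}" for c using that by simp
  show "jn (quot Ops X \<psi>) (\<psi>``{a}) (\<psi>``{b}) = \<psi>``{Jn a b}"
    unfolding quot_def apply simp
    apply (rule UN_const[OF _ na], rule UN_const[OF _ nb])
    using C ra rb unfolding is_cong_def by (metis equiv_class_eq)
  show "mt (quot Ops X \<psi>) (\<psi>``{a}) (\<psi>``{b}) = \<psi>``{Mt a b}"
    unfolding quot_def apply simp
    apply (rule UN_const[OF _ na], rule UN_const[OF _ nb])
    using C ra rb unfolding is_cong_def by (metis equiv_class_eq)
  show "cp (quot Ops X \<psi>) (\<psi>``{a}) = \<psi>``{Cp a}"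
    unfolding quot_def apply simp
    apply (rule UN_const[OF _ na])
    using C ra unfolding is_cong_def by (metis equiv_class_eq)
  show "l \<in> Ops \<Longrightarrow> sop (quot Ops X \<psi>) l (\<psi>``{a}) = \<psi>``{Op l a}"
    unfolding quot_def apply simp
    apply (rule UN_const[OF _ na])
    using C ra unfolding is_cong_def by (metis equiv_class_eq)
qed

lemma cls_sop: "is_cong Ops X \<psi> \<Longrightarrow> a \<in> Terms Ops X \<Longrightarrow> l \<in> Ops \<Longrightarrow>
   sop (quot Ops X \<psi>) l (\<psi>``{a}) = \<psi>``{Op l a}"
  using cls_ops(4)[of Ops X \<psi> a Zr l] by simp

lemma wapp_simps[simp]: "wapp A [] x = x" "wapp A (l # w) x = sop A l (wapp A w x)"
  by (simp_all add: wapp_def)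

lemma wapp_cls: "is_cong Ops X \<psi> \<Longrightarrow> set w \<subseteq> Ops \<Longrightarrow> a \<in> Terms Ops X \<Longrightarrow>
  wapp (quot Ops X \<psi>) w (\<psi>``{a}) = \<psi>``{opw w a}"
  by (induct w) (auto simp: cls_ops opw_Terms)

definition Sem :: "'i lab set \<Rightarrow> 'x set \<Rightarrow> (('x, 'i lab) trm \<times> ('x, 'i lab) trm) set" where
  "Sem Ops X = {(s, t). s \<in> Terms Ops X \<and> t \<in> Terms Ops X \<and> (\<forall>v. eval v s = eval v t)}"

lemma Sem_cong: "is_cong Ops X (Sem Ops X)"
  unfolding is_cong_def equiv_def refl_on_def sym_def trans_def Sem_def by auto

lemma Sem_iff: "a \<in> Terms Ops X \<Longrightarrow> b \<in> Terms Ops X \<Longrightarrow>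
   Sem Ops X``{a} = Sem Ops X``{b} \<longleftrightarrow> (\<forall>v. eval v a = eval v b)"
  using eq_equiv_class_iff[OF cong_equiv[OF Sem_cong], of a Ops X b] by (auto simp: Sem_def)

lemma quot_rep: "x \<in> car (quot Ops X \<psi>) \<Longrightarrow> \<exists>a. a \<in> Terms Ops X \<and> x = \<psi>``{a}"
  by (auto elim: quotientE)

lemma quot_repE: "x \<in> car (quot Ops X \<psi>) \<Longrightarrow> (\<And>a. a \<in> Terms Ops X \<Longrightarrow> x = \<psi>``{a} \<Longrightarrow> P) \<Longrightarrow> P"
  using quot_rep by blast

lemma ball_quot: "(\<forall>x\<in>car (quot Ops X \<psi>). P x) \<longleftrightarrow> (\<forall>a\<in>Terms Ops X. P (\<psi>``{a}))"
  by (auto simp del: quot_simps simp: quot_def elim!: quotientE intro: quotientI)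

lemma Sem_var: "in_var Ops (quot Ops X (Sem Ops X))"
proof -
  note co = cls_ops[OF Sem_cong] cls_sop[OF Sem_cong]
  have BA: "is_BA (quot Ops X (Sem Ops X))"
    unfolding is_BA_def ball_quot by (simp add: co Sem_iff quotientI) auto
  have EN: "bool_endo (quot Ops X (Sem Ops X)) (sop (quot Ops X (Sem Ops X)) l)" if l: "l \<in> Ops" for l
    unfolding bool_endo_def ball_quot using l by (simp add: co Sem_iff quotientI case_prod_unfold)
  have W: "wapp (quot Ops X (Sem Ops X)) w1 x = wapp (quot Ops X (Sem Ops X)) w2 x"
    if H: "set w1 \<subseteq> Ops" "set w2 \<subseteq> Ops" "wmap w1 = wmap w2" "x \<in> car (quot Ops X (Sem Ops X))" for w1 w2 x
  proof -
    obtain a where a: "a \<in> Terms Ops X" "x = Sem Ops X``{a}" using quot_rep[OF H(4)] by blast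
    show ?thesis using H a by (simp add: wapp_cls[OF Sem_cong] Sem_iff opw_Terms eval_opw)
  qed
  show ?thesis unfolding in_var_def using BA EN W by blast
qed

lemma theta_sub: "theta Ops X \<subseteq> Sem Ops X"
  unfolding theta_def using Sem_cong Sem_var by blast


lemma wapp_car: "\<forall>l\<in>set w. bool_endo A (sop A l) \<Longrightarrow> x \<in> car A \<Longrightarrow> wapp A w x \<in> car A"
  by (induct w) (auto simp: bool_endo_def)

lemma wapp_endo0: assumes "\<forall>l\<in>set w. bool_endo A (sop A l)"
  shows "x \<in> car A \<Longrightarrow> y \<in> car A \<Longrightarrow> wapp A w (jn A x y) = jn A (wapp A w x) (wapp A w y) \<and>
     wapp A w (mt A x y) = mt A (wapp A w x) (wapp A w y) \<and> wapp A w (cp A x) = cp A (wapp A w x) \<and>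
     wapp A w (zr A) = zr A \<and> wapp A w (un A) = un A"
  using assms
proof (induct w)
  case (Cons l w)
  have c: "wapp A w x \<in> car A" "wapp A w y \<in> car A" using Cons wapp_car[of w A] by auto
  then show ?case using Cons by (auto simp: bool_endo_def)
qed simp

lemma wapp_endo: assumes V: "in_var Ops A" and w: "set w \<subseteq> Ops"
  shows "x \<in> car A \<Longrightarrow> wapp A w x \<in> car A"
   "x \<in> car A \<Longrightarrow> y \<in> car A \<Longrightarrow> wapp A w (jn A x y) = jn A (wapp A w x) (wapp A w y)"
   "x \<in> car A \<Longrightarrow> y \<in> car A \<Longrightarrow> wapp A w (mt A x y) = mt A (wapp A w x) (wapp A w y)"
   "x \<in> car A \<Longrightarrow> wapp A w (cp A x) = cp A (wapp A w x)"
   "wapp A w (zr A) = zr A" "wapp A w (un A) = un A"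
proof -
  have E: "\<forall>l\<in>set w. bool_endo A (sop A l)" using V w unfolding in_var_def by blast
  have Z: "zr A \<in> car A" using V unfolding in_var_def is_BA_def by blast
  show "x \<in> car A \<Longrightarrow> wapp A w x \<in> car A" by (rule wapp_car[OF E])
  show "x \<in> car A \<Longrightarrow> y \<in> car A \<Longrightarrow> wapp A w (jn A x y) = jn A (wapp A w x) (wapp A w y)"
    using wapp_endo0[OF E] by blast
  show "x \<in> car A \<Longrightarrow> y \<in> car A \<Longrightarrow> wapp A w (mt A x y) = mt A (wapp A w x) (wapp A w y)"
    using wapp_endo0[OF E] by blast
  show "x \<in> car A \<Longrightarrow> wapp A w (cp A x) = cp A (wapp A w x)"
    using wapp_endo0[OF E] by blast
  show "wapp A w (zr A) = zr A" using wapp_endo0[OF E Z Z] by blast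
  show "wapp A w (un A) = un A" using wapp_endo0[OF E Z Z] by blast
qed

lemma rep_push: assumes C: "is_cong Ops X \<psi>" and V: "in_var Ops (quot Ops X \<psi>)"
  shows "t \<in> Terms Ops X \<Longrightarrow> set w \<subseteq> Ops \<Longrightarrow>
    \<psi>``{opw w t} = bI (quot Ops X \<psi>) (\<lambda>q. \<psi>``{opw (fst q) (Var (snd q))}) (push w t)"
proof (induct t arbitrary: w)
  case (Jn a b)
  have "\<psi>``{opw w (Jn a b)} = jn (quot Ops X \<psi>) (\<psi>``{opw w a}) (\<psi>``{opw w b})"
    using wapp_endo(2)[OF V Jn(4), of "\<psi>``{a}" "\<psi>``{b}"] wapp_cls[OF C Jn(4)] cls_ops(1)[OF C, of a b] Jn.prems
    by (simp add: quotientI)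
  then show ?case using Jn by simp
next
  case (Mt a b)
  have "\<psi>``{opw w (Mt a b)} = mt (quot Ops X \<psi>) (\<psi>``{opw w a}) (\<psi>``{opw w b})"
    using wapp_endo(3)[OF V Mt(4), of "\<psi>``{a}" "\<psi>``{b}"] wapp_cls[OF C Mt(4)] cls_ops(2)[OF C, of a b] Mt.prems
    by (simp add: quotientI)
  then show ?case using Mt by simp
next
  case (Cp a)
  have "\<psi>``{opw w (Cp a)} = cp (quot Ops X \<psi>) (\<psi>``{opw w a})"
    using wapp_endo(4)[OF V Cp(3), of "\<psi>``{a}"] wapp_cls[OF C Cp(3)] cls_ops(3)[OF C, of a a] Cp.prems
    by (simp add: quotientI)
  then show ?case using Cp by simp
next
  case Zr
  have "\<psi>``{opw w Zr} = wapp (quot Ops X \<psi>) w (\<psi>``{Zr})" using Zr C by (simp add: wapp_cls)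
  then show ?case using wapp_endo(5)[OF V Zr(2)] by simp
next
  case Tp
  have "\<psi>``{opw w Tp} = wapp (quot Ops X \<psi>) w (\<psi>``{Tp})" using Tp C by (simp add: wapp_cls)
  then show ?case using wapp_endo(6)[OF V Tp(2)] by simp
next
  case (Op l t)
  then show ?case using Op(1)[of "w @ [l]"] by simp
qed simp

lemma finite_set_bf: "finite (set_bf f)"
  by (induct f) auto

lemma completeness: assumes C: "is_cong Ops X \<psi>" and V: "in_var Ops (quot Ops X \<psi>)"
  and st: "(s, t) \<in> Sem Ops X" shows "(s, t) \<in> \<psi>"
proof -
  let ?Q = "quot Ops X \<psi>"
  interpret BA ?Q using V unfolding in_var_def by unfold_locales blast
  have s: "s \<in> Terms Ops X" and t: "t \<in> Terms Ops X" and ev: "\<forall>v. eval v s = eval v t"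
    using st by (auto simp: Sem_def)
  define \<rho> where "\<rho> = (\<lambda>q. \<psi>``{opw (wof Ops (fst q)) (Var (snd q))})"
  have cls: "\<psi>``{u} = bI ?Q \<rho> (nf u)" if u: "u \<in> Terms Ops X" for u
  proof -
    have "\<psi>``{u} = bI ?Q (\<lambda>q. \<psi>``{opw (fst q) (Var (snd q))}) (push [] u)"
      using rep_push[OF C V u, of "[]"] by simp
    also have "\<dots> = bI ?Q (\<rho> \<circ> kap) (push [] u)"
    proof (rule bI_cong, rule ballI)
      fix q assume q: "q \<in> set_bf (push [] u)"
      then have q1: "set (fst q) \<subseteq> Ops" and q2: "snd q \<in> X" using set_push[OF q] u by (auto simp: Terms_def)
      have rz: "realz Ops (wmap (fst q))" using q1 by (auto simp: realz_def)
      have x: "\<psi>``{Var (snd q)} \<in> car ?Q" using q2 by (simp add: quotientI)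
      have "(\<rho> \<circ> kap) q = wapp ?Q (wof Ops (wmap (fst q))) (\<psi>``{Var (snd q)})"
        using wof[OF rz] q2 C by (simp add: \<rho>_def kap_def wapp_cls)
      also have "\<dots> = wapp ?Q (fst q) (\<psi>``{Var (snd q)})"
        using V wof[OF rz] q1 x unfolding in_var_def by blast
      also have "\<dots> = \<psi>``{opw (fst q) (Var (snd q))}" using q1 q2 C by (simp add: wapp_cls)
      finally show "\<psi>``{opw (fst q) (Var (snd q))} = (\<rho> \<circ> kap) q" by simp
    qed
    also have "\<dots> = bI ?Q \<rho> (nf u)" by (simp add: nf_def bI_map)
    finally show ?thesis .
  qed
  obtain ps where ps: "set ps = set_bf (nf s) \<union> set_bf (nf t)"
    using finite_list[of "set_bf (nf s) \<union> set_bf (nf t)"] finite_set_bf by blast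
  have rc: "\<forall>q\<in>set ps. \<rho> q \<in> car ?Q"
  proof
    fix q assume "q \<in> set ps"
    then have "realz Ops (fst q) \<and> snd q \<in> X" using ps set_nf[OF s, of q] set_nf[OF t, of q] s t
      by (auto simp: Terms_def)
    then show "\<rho> q \<in> car ?Q" using wof[of Ops "fst q"] by (simp add: \<rho>_def quotientI opw_Terms)
  qed
  have "bI ?Q \<rho> (nf s) = bI ?Q \<rho> (nf t)"
    by (rule complete) (use ps rc ev in \<open>auto simp: eval_nf\<close>)
  then have "\<psi>``{s} = \<psi>``{t}" using cls s t by simp
  then show ?thesis using eq_equiv_class[OF _ cong_equiv[OF C] t] by blast
qed

lemma theta_eq: "theta Ops X = Sem Ops X"
proof
  show "theta Ops X \<subseteq> Sem Ops X" by (rule theta_sub)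
  show "Sem Ops X \<subseteq> theta Ops X"
  proof
    fix p assume p: "p \<in> Sem Ops X"
    then obtain s t where st: "p = (s, t)" by (cases p)
    have "p \<in> \<psi>" if "is_cong Ops X \<psi>" "in_var Ops (quot Ops X \<psi>)" for \<psi>
      using completeness[OF that] p st by blast
    then show "p \<in> theta Ops X" using p st unfolding theta_def by (auto simp: Sem_def)
  qed
qed


lemma frgen_eq: "frgen Ops X x = Sem Ops X``{Var x}"
  by (simp add: frgen_def theta_eq)

lemma Fr_eq: "Fr Ops X = quot Ops X (Sem Ops X)"
  by (simp add: Fr_def theta_eq)

lemma Sg_rep: "y \<in> Sg (quot Ops X (Sem Ops X)) Ops (frgen Ops X ` Y) \<Longrightarrow> Y \<subseteq> X \<Longrightarrow>
  \<exists>s. s \<in> Terms Ops X \<and> vars s \<subseteq> Y \<and> y = Sem Ops X``{s}"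
proof (induct rule: Sg.induct)
  case (gen z)
  then obtain x where "x \<in> Y" "z = frgen Ops X x" by blast
  then show ?case using gen by (intro exI[of _ "Var x"]) (auto simp: frgen_eq)
next
  case zr then show ?case by (intro exI[of _ Zr]) simp
next
  case un then show ?case by (intro exI[of _ Tp]) simp
next
  case (cp x)
  then obtain s where "s \<in> Terms Ops X" "vars s \<subseteq> Y" "x = Sem Ops X``{s}" by blast
  then show ?case by (intro exI[of _ "Cp s"]) (simp add: cls_ops[OF Sem_cong])
next
  case (jn x y)
  then obtain s t where "s \<in> Terms Ops X" "vars s \<subseteq> Y" "x = Sem Ops X``{s}"
    "t \<in> Terms Ops X" "vars t \<subseteq> Y" "y = Sem Ops X``{t}" by blast
  then show ?case by (intro exI[of _ "Jn s t"]) (simp add: cls_ops[OF Sem_cong])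
next
  case (mt x y)
  then obtain s t where "s \<in> Terms Ops X" "vars s \<subseteq> Y" "x = Sem Ops X``{s}"
    "t \<in> Terms Ops X" "vars t \<subseteq> Y" "y = Sem Ops X``{t}" by blast
  then show ?case by (intro exI[of _ "Mt s t"]) (simp add: cls_ops[OF Sem_cong])
next
  case (op l x)
  then obtain s where "s \<in> Terms Ops X" "vars s \<subseteq> Y" "x = Sem Ops X``{s}" by blast
  then show ?case using op by (intro exI[of _ "Op l s"]) (simp add: cls_sop[OF Sem_cong])
qed

lemma Sg_of: "s \<in> Terms Ops X \<Longrightarrow> vars s \<subseteq> Y \<Longrightarrow> Sem Ops X``{s} \<in> Sg (quot Ops X (Sem Ops X)) Ops (frgen Ops X ` Y)"
proof (induct s)
  case (Var x) show ?case by (rule Sg.gen) (use Var in \<open>auto simp: frgen_eq\<close>)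
next
  case (Jn a b)
  have "jn (quot Ops X (Sem Ops X)) (Sem Ops X``{a}) (Sem Ops X``{b}) \<in> Sg (quot Ops X (Sem Ops X)) Ops (frgen Ops X ` Y)"
    by (rule Sg.jn) (use Jn in auto)
  then show ?case using Jn.prems by (simp add: cls_ops[OF Sem_cong])
next
  case (Mt a b)
  have "mt (quot Ops X (Sem Ops X)) (Sem Ops X``{a}) (Sem Ops X``{b}) \<in> Sg (quot Ops X (Sem Ops X)) Ops (frgen Ops X ` Y)"
    by (rule Sg.mt) (use Mt in auto)
  then show ?case using Mt.prems by (simp add: cls_ops[OF Sem_cong])
next
  case (Cp a)
  have "cp (quot Ops X (Sem Ops X)) (Sem Ops X``{a}) \<in> Sg (quot Ops X (Sem Ops X)) Ops (frgen Ops X ` Y)"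
    by (rule Sg.cp) (use Cp in auto)
  then show ?case using Cp.prems by (simp add: cls_ops[OF Sem_cong])
next
  case Zr then show ?case using Sg.zr[of "quot Ops X (Sem Ops X)"] by simp
next
  case Tp then show ?case using Sg.un[of "quot Ops X (Sem Ops X)"] by simp
next
  case (Op l a)
  have "sop (quot Ops X (Sem Ops X)) l (Sem Ops X``{a}) \<in> Sg (quot Ops X (Sem Ops X)) Ops (frgen Ops X ` Y)"
    by (rule Sg.op) (use Op in auto)
  then show ?case using Op.prems by (simp add: cls_sop[OF Sem_cong])
qed

lemma leq_iff: "a \<in> Terms Ops X \<Longrightarrow> b \<in> Terms Ops X \<Longrightarrow>
  leq (quot Ops X (Sem Ops X)) (Sem Ops X``{a}) (Sem Ops X``{b}) \<longleftrightarrow> (\<forall>v. eval v a \<longrightarrow> eval v b)"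
  by (simp add: leq_def cls_ops[OF Sem_cong] Sem_iff) blast

lemma interp: assumes s: "s \<in> Terms Ops X" "vars s \<subseteq> X1" and t: "t \<in> Terms Ops X" "vars t \<subseteq> X2"
  and st: "\<forall>v. eval v s \<longrightarrow> eval v t"
  shows "\<exists>u. u \<in> Terms Ops X \<and> vars u \<subseteq> X1 \<inter> X2 \<and> (\<forall>v. eval v s \<longrightarrow> eval v u) \<and> (\<forall>v. eval v u \<longrightarrow> eval v t)"
proof -
  obtain ps where ps: "set ps = {q \<in> set_bf (nf s). snd q \<notin> X2}"
    using finite_list[of "{q \<in> set_bf (nf s). snd q \<notin> X2}"] finite_set_bf by auto
  define u' where "u' = elimL ps (nf s)"
  have at: "q \<in> set_bf (nf s) \<and> q \<notin> set ps" if "q \<in> set_bf u'" for q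
    using that set_elimL[of ps "nf s"] unfolding u'_def by blast
  have R: "\<forall>q\<in>set_bf u'. realz Ops (fst q) \<and> snd q \<in> X1 \<inter> X2 \<and> snd q \<in> X"
  proof
    fix q assume "q \<in> set_bf u'"
    then have "q \<in> set_bf (nf s)" "q \<notin> set ps" using at by auto
    then show "realz Ops (fst q) \<and> snd q \<in> X1 \<inter> X2 \<and> snd q \<in> X"
      using set_nf[OF s(1), of q] s ps by (auto simp: Terms_def)
  qed
  define u where "u = toT Ops u'"
  have ev: "eval v u = beval v u'" for v unfolding u_def by (rule eval_toT) (use R in blast)
  have uT: "u \<in> Terms Ops X" unfolding Terms_def u_def using R opsof_toT[of u' Ops]
    by (auto simp: vars_toT)
  have uv: "vars u \<subseteq> X1 \<inter> X2" unfolding u_def using R by (auto simp: vars_toT)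
  have 1: "\<forall>v. eval v s \<longrightarrow> eval v u"
  proof (intro allI impI)
    fix v assume "eval v s"
    then have "beval v (nf s)" by (simp add: eval_nf)
    then have "beval v u'" unfolding u'_def beval_elimL by blast
    then show "eval v u" by (simp add: ev)
  qed
  have 2: "\<forall>v. eval v u \<longrightarrow> eval v t"
  proof (intro allI impI)
    fix v assume "eval v u"
    then obtain w where w: "\<forall>q. q \<notin> set ps \<longrightarrow> w q = v q" "beval w (nf s)"
      unfolding ev u'_def beval_elimL by blast
    then have "beval w (nf t)" using st by (simp add: eval_nf[symmetric])
    moreover have "\<forall>q\<in>set_bf (nf t). w q = v q"
    proof
      fix q assume "q \<in> set_bf (nf t)"
      then have "snd q \<in> X2" using set_nf[OF t(1), of q] t by auto
      then have "q \<notin> set ps" using ps by auto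
      then show "w q = v q" using w(1) by blast
    qed
    ultimately show "eval v t" using beval_cong[of "nf t" w v] by (simp add: eval_nf)
  qed
  show ?thesis using uT uv 1 2 by blast
qed

theorem theorem6p7:
  fixes Ops :: "'i lab set" and X X1 X2 :: "'x set"
    and a c :: "('x, 'i lab) trm set"
  assumes alpha2: "\<exists>i j :: 'i. i \<noteq> j"
    and V: "Ops = TAops \<or> Ops = SAops"
    and XU: "X1 \<union> X2 = X"
    and a: "a \<in> Sg (Fr Ops X) Ops (frgen Ops X ` X1)"
    and c: "c \<in> Sg (Fr Ops X) Ops (frgen Ops X ` X2)"
    and ac: "leq (Fr Ops X) a c"
  shows "\<exists>b \<in> Sg (Fr Ops X) Ops (frgen Ops X ` (X1 \<inter> X2)).
           leq (Fr Ops X) a b \<and> leq (Fr Ops X) b c"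
proof -
  have X1: "X1 \<subseteq> X" and X2: "X2 \<subseteq> X" using XU by auto
  obtain s where s: "s \<in> Terms Ops X" "vars s \<subseteq> X1" "a = Sem Ops X``{s}"
    using Sg_rep[OF a[unfolded Fr_eq] X1] by blast
  obtain t where t: "t \<in> Terms Ops X" "vars t \<subseteq> X2" "c = Sem Ops X``{t}"
    using Sg_rep[OF c[unfolded Fr_eq] X2] by blast
  have st: "\<forall>v. eval v s \<longrightarrow> eval v t" using ac s t leq_iff by (metis Fr_eq)
  obtain u where u: "u \<in> Terms Ops X" "vars u \<subseteq> X1 \<inter> X2" "\<forall>v. eval v s \<longrightarrow> eval v u"
    "\<forall>v. eval v u \<longrightarrow> eval v t" using interp[OF s(1,2) t(1,2) st] by blast
  show ?thesis unfolding Fr_eq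
  proof (rule bexI[of _ "Sem Ops X``{u}"])
    show "Sem Ops X``{u} \<in> Sg (quot Ops X (Sem Ops X)) Ops (frgen Ops X ` (X1 \<inter> X2))"
      by (rule Sg_of[OF u(1,2)])
    show "leq (quot Ops X (Sem Ops X)) a (Sem Ops X``{u}) \<and> leq (quot Ops X (Sem Ops X)) (Sem Ops X``{u}) c"
      using s t u by (simp add: leq_iff)
  qed
qed

end
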